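(* Let $A$ be a real symmetric matrix with $\mathrm{Tr}(A^2)=1$, let $q\in\mathbb{N}$, and let $\rho(A)=\max\{|\lambda|:\lambda\in\mathrm{spec}(A)\}$. If $\rho(A)\le 1/q$, then $$\mathcal{R}_q(A)\ge\prod_{k=1}^{q-1}\big(1-k\rho(A)\big).$$
   Context: For a real symmetric matrix $A$ with eigenvalues $(\lambda_i)$ (with multiplicity), $\mathcal{R}_q(A)=\sum\lambda_{i_1}^2\cdots\lambda_{i_q}^2$, the sum over ordered $q$-tuples of pairwise distinct indices. *)

theory Defs
  imports "Jordan_Normal_Form.Spectral_Radius" "HOL-Library.FuncSet"
begin

definition mat_trace :: "'a :: comm_ring_1 mat \<Rightarrow> 'a" where
  "mat_trace A = (\<Sum>i<dim_row A. A $$ (i, i))"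

definition real_spec_rad :: "real mat \<Rightarrow> real" where
  "real_spec_rad A = Max (abs ` spectrum A)"

text \<open>R_q of a list of eigenvalues (with multiplicity): sum over ordered q-tuples of
  pairwise distinct indices of the product of the squared eigenvalues.\<close>
definition R_q :: "nat \<Rightarrow> real list \<Rightarrow> real" where
  "R_q q ls = (\<Sum>f \<in> {f. f \<in> {..<q} \<rightarrow>\<^sub>E {..<length ls} \<and> inj_on f {..<q}}.
                 \<Prod>j<q. (ls ! f j)\<^sup>2)"

end

theory Submission
  imports Defs
begin


definition Inj :: "nat \<Rightarrow> nat \<Rightarrow> (nat \<Rightarrow> nat) set" where
  "Inj m q = {f. f \<in> {..<q} \<rightarrow>\<^sub>E {..<m} \<and> inj_on f {..<q}}"

lemma finite_Inj: "finite (Inj m q)"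
  unfolding Inj_def by (rule finite_subset[OF _ finite_PiE[of "{..<q}" "\<lambda>_. {..<m}"]]) auto

lemma Inj_0: "Inj m 0 = {\<lambda>_. undefined}"
  unfolding Inj_def by auto

lemma Inj_Suc: "Inj m (Suc q) = (\<lambda>(f,i). f(q:=i)) ` (SIGMA f:Inj m q. {..<m} - f ` {..<q})"
proof
  show "Inj m (Suc q) \<subseteq> (\<lambda>(f,i). f(q:=i)) ` (SIGMA f:Inj m q. {..<m} - f ` {..<q})"
  proof
    fix h assume h: "h \<in> Inj m (Suc q)"
    let ?f = "h(q:=undefined)"
    have "h = (\<lambda>(f,i). f(q:=i)) (?f, h q)" by simp
    moreover have "?f \<in> Inj m q" using h unfolding Inj_def
      by (auto simp: PiE_def extensional_def inj_on_def)
    moreover have "h q \<in> {..<m} - ?f ` {..<q}" using h unfolding Inj_def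
      apply (auto simp: inj_on_def) by (metis lessThan_iff less_SucI lessI less_irrefl)
    ultimately show "h \<in> (\<lambda>(f,i). f(q:=i)) ` (SIGMA f:Inj m q. {..<m} - f ` {..<q})"
      by blast
  qed
next
  show "(\<lambda>(f,i). f(q:=i)) ` (SIGMA f:Inj m q. {..<m} - f ` {..<q}) \<subseteq> Inj m (Suc q)"
    unfolding Inj_def by (auto simp: PiE_def extensional_def inj_on_def less_Suc_eq)
qed

lemma inj_Suc: "inj_on (\<lambda>(f,i). f(q:=i)) (SIGMA f:Inj m q. {..<m} - f ` {..<q})"
proof (rule inj_onI, clarify)
  fix f i g k
  assume f: "f \<in> Inj m q" and g: "g \<in> Inj m q" and e: "f(q := i) = g(q := k)"
  have "f q = undefined" "g q = undefined" using f g unfolding Inj_def by (auto simp: PiE_def extensional_def)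
  then have "f = g" using e by (metis fun_upd_triv fun_upd_upd)
  moreover have "i = k" using e by (metis fun_upd_same)
  ultimately show "f = g \<and> i = k" by simp
qed

definition S :: "(nat \<Rightarrow> real) \<Rightarrow> nat \<Rightarrow> nat \<Rightarrow> real" where
  "S x m q = (\<Sum>f\<in>Inj m q. \<Prod>j<q. x (f j))"

lemma S_nonneg: "(\<And>i. x i \<ge> 0) \<Longrightarrow> S x m q \<ge> 0"
  unfolding S_def by (intro sum_nonneg prod_nonneg) auto

lemma S_Suc:
  assumes x0: "\<And>i. i < m \<Longrightarrow> x i \<ge> 0" and s1: "(\<Sum>i<m. x i) = 1"
    and c: "\<And>i. i < m \<Longrightarrow> x i \<le> c" and qc: "real q * c \<le> 1"
  shows "S x m (Suc q) \<ge> (1 - real q * c) * S x m q"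
proof -
  let ?P = "\<lambda>f. \<Prod>j<q. x (f j)"
  let ?T = "\<lambda>f. {..<m} - f ` {..<q}"
  have "S x m (Suc q) = (\<Sum>p\<in>(SIGMA f:Inj m q. ?T f). \<Prod>j<Suc q. x (((fst p)(q := snd p)) j))"
    unfolding S_def Inj_Suc by (subst sum.reindex[OF inj_Suc]) (simp add: case_prod_beta)
  also have "\<dots> = (\<Sum>f\<in>Inj m q. \<Sum>i\<in>?T f. \<Prod>j<Suc q. x ((f(q := i)) j))"
    by (subst sum.Sigma) (auto simp: finite_Inj split_def)
  also have "\<dots> = (\<Sum>f\<in>Inj m q. ?P f * (\<Sum>i\<in>?T f. x i))"
  proof (rule sum.cong[OF refl])
    fix f assume "f \<in> Inj m q"
    have "(\<Prod>j<Suc q. x ((f(q := i)) j)) = ?P f * x i" for i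
      by (simp add: prod.lessThan_Suc)
    then show "(\<Sum>i\<in>?T f. \<Prod>j<Suc q. x ((f(q := i)) j)) = ?P f * (\<Sum>i\<in>?T f. x i)"
      by (simp add: sum_distrib_left)
  qed
  also have "\<dots> \<ge> (\<Sum>f\<in>Inj m q. ?P f * (1 - real q * c))"
  proof (rule sum_mono)
    fix f assume f: "f \<in> Inj m q"
    have sub: "f ` {..<q} \<subseteq> {..<m}" and inj: "inj_on f {..<q}" using f unfolding Inj_def by auto
    have e1: "(\<Sum>i\<in>?T f. x i) = (\<Sum>i<m. x i) - (\<Sum>i\<in>f ` {..<q}. x i)"
      using sub by (simp add: sum_diff)
    have e2: "(\<Sum>i\<in>f ` {..<q}. x i) = (\<Sum>j<q. x (f j))"
      using inj by (simp add: sum.reindex)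
    have e3: "(\<Sum>j<q. x (f j)) \<le> (\<Sum>j<q. c)"
      using sub c by (intro sum_mono) auto
    have "(\<Sum>i\<in>?T f. x i) \<ge> 1 - real q * c" using s1 e1 e2 e3 by simp
    moreover have "?P f \<ge> 0" using sub x0 by (intro prod_nonneg) auto
    ultimately show "?P f * (1 - real q * c) \<le> ?P f * (\<Sum>i\<in>?T f. x i)"
      by (simp add: mult_left_mono)
  qed
  also have "(\<Sum>f\<in>Inj m q. ?P f * (1 - real q * c)) = (1 - real q * c) * S x m q"
    unfolding S_def by (simp add: sum_distrib_left mult.commute)
  finally show ?thesis .
qed

lemma S_bound:
  assumes x0: "\<And>i. i < m \<Longrightarrow> x i \<ge> 0" and s1: "(\<Sum>i<m. x i) = 1"
    and c: "\<And>i. i < m \<Longrightarrow> x i \<le> c" and c0: "c \<ge> 0"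
  shows "real q * c \<le> 1 + c \<Longrightarrow> S x m q \<ge> (\<Prod>k<q. 1 - real k * c)"
proof (induction q)
  case 0
  then show ?case by (simp add: S_def Inj_0)
next
  case (Suc q)
  have qc: "real q * c \<le> 1" using Suc.prems by (simp add: algebra_simps)
  then have IH: "S x m q \<ge> (\<Prod>k<q. 1 - real k * c)" using Suc.IH c0 by simp
  have "(\<Prod>k<Suc q. 1 - real k * c) = (1 - real q * c) * (\<Prod>k<q. 1 - real k * c)"
    by (simp add: prod.lessThan_Suc mult.commute)
  also have "\<dots> \<le> (1 - real q * c) * S x m q"
    using IH qc by (intro mult_left_mono) auto
  also have "\<dots> \<le> S x m (Suc q)" by (rule S_Suc[OF x0 s1 c qc]) auto
  finally show ?case .
qed


lemma trace_comm:
  fixes A B :: "'a::comm_ring_1 mat"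
  assumes A: "A \<in> carrier_mat n m" and B: "B \<in> carrier_mat m n"
  shows "mat_trace (A * B) = mat_trace (B * A)"
proof -
  have "mat_trace (A * B) = (\<Sum>i<n. \<Sum>k<m. A $$ (i,k) * B $$ (k,i))"
    using A B unfolding mat_trace_def
    by (auto simp: scalar_prod_def lessThan_atLeast0 intro!: sum.cong)
  also have "\<dots> = (\<Sum>k<m. \<Sum>i<n. B $$ (k,i) * A $$ (i,k))"
    by (subst sum.swap) (simp add: mult.commute)
  also have "\<dots> = mat_trace (B * A)"
    using A B unfolding mat_trace_def
    by (auto simp: scalar_prod_def lessThan_atLeast0 intro!: sum.cong)
  finally show ?thesis .
qed

lemma trace_ut_sq:
  fixes B :: "real mat"
  assumes B: "B \<in> carrier_mat n n" and ut: "upper_triangular B"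
  shows "mat_trace (B * B) = (\<Sum>i<n. (B $$ (i,i))\<^sup>2)"
proof -
  have "mat_trace (B * B) = (\<Sum>i<n. \<Sum>k<n. B $$ (i,k) * B $$ (k,i))"
    using B unfolding mat_trace_def
    by (auto simp: scalar_prod_def lessThan_atLeast0 intro!: sum.cong)
  also have "\<dots> = (\<Sum>i<n. (B $$ (i,i))\<^sup>2)"
  proof (rule sum.cong[OF refl])
    fix i assume i: "i \<in> {..<n}"
    have "(\<Sum>k<n. B $$ (i,k) * B $$ (k,i)) = B $$ (i,i) * B $$ (i,i)"
    proof -
      have z: "(\<Sum>k\<in>{..<n} - {i}. B $$ (i,k) * B $$ (k,i)) = 0"
      proof (rule sum.neutral, rule ballI)
        fix k assume k: "k \<in> {..<n} - {i}"
        show "B $$ (i,k) * B $$ (k,i) = 0"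
        proof (cases "k < i")
          case True then show ?thesis using ut B i by (auto simp: upper_triangular_def)
        next
          case False then have "i < k" using k by simp
          then show ?thesis using ut B k by (auto simp: upper_triangular_def)
        qed
      qed
      show ?thesis using sum.remove[of "{..<n}" i "\<lambda>k. B $$ (i,k) * B $$ (k,i)"] i z by simp
    qed
    then show "(\<Sum>k<n. B $$ (i,k) * B $$ (k,i)) = (B $$ (i,i))\<^sup>2"
      by (simp add: power2_eq_square)
  qed
  finally show ?thesis .
qed

theorem lemma4p2:
  fixes A :: "real mat" and n q :: nat and ls :: "real list"
  assumes "A \<in> carrier_mat n n"
    and "transpose_mat A = A"
    and "char_poly A = (\<Prod>a\<leftarrow>ls. [:- a, 1:])"
    and "mat_trace (A * A) = 1"
    and "real_spec_rad A \<le> 1 / real q"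
  shows "R_q q ls \<ge> (\<Prod>k = 1..<q. (1 - real k * real_spec_rad A))"
proof -
  note Ac = assms(1) and cp = assms(3) and tr = assms(4) and rho = assms(5)
  define r where "r = real_spec_rad A"
  obtain B P Q where sd: "schur_decomposition A ls = (B,P,Q)"
    by (cases "schur_decomposition A ls") auto
  from schur_decomposition[OF Ac cp sd]
  have sim: "similar_mat_wit A B P Q" and ut: "upper_triangular B" and dg: "diag_mat B = ls"
    by auto
  have Bc: "B \<in> carrier_mat n n" and Pc: "P \<in> carrier_mat n n"
    and Qc: "Q \<in> carrier_mat n n" and QP: "Q * P = 1\<^sub>m n" and AP: "A = P * B * Q"
  proof -
    have "{A,B,P,Q} \<subseteq> carrier_mat n n \<and> P * Q = 1\<^sub>m n \<and> Q * P = 1\<^sub>m n \<and> A = P * B * Q"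
      using sim Ac unfolding similar_mat_wit_def Let_def by simp
    then show "B \<in> carrier_mat n n" "P \<in> carrier_mat n n" "Q \<in> carrier_mat n n"
      "Q * P = 1\<^sub>m n" "A = P * B * Q" by blast+
  qed
  have len: "length ls = n" using dg Bc unfolding diag_mat_def by auto
  have lsi: "i < n \<Longrightarrow> ls ! i = B $$ (i,i)" for i using dg Bc unfolding diag_mat_def by auto
  have "A * A = P * B * (Q * P) * B * Q"
    using Pc Bc Qc unfolding AP
    by (simp add: assoc_mult_mat[of _ n n _ n _ n] right_mult_one_mat)
  also have "\<dots> = P * ((B * B) * Q)"
    using Pc Bc Qc unfolding QP
    by (simp add: assoc_mult_mat[of _ n n _ n _ n] right_mult_one_mat)
  finally have AA: "A * A = P * ((B * B) * Q)" .
  have "mat_trace (A * A) = mat_trace ((B * B) * Q * P)"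
    unfolding AA using Pc Bc Qc by (subst trace_comm[of _ n n]) auto
  also have "\<dots> = mat_trace (B * B)"
    using Pc Bc Qc QP by (simp add: assoc_mult_mat[of _ n n _ n _ n] right_mult_one_mat)
  also have "\<dots> = (\<Sum>i<n. (ls ! i)\<^sup>2)" using trace_ut_sq[OF Bc ut] lsi by simp
  finally have s1: "(\<Sum>i<length ls. (ls ! i)\<^sup>2) = 1" using tr len by simp
  have fin: "finite (spectrum A)" using card_finite_spectrum[OF Ac] by simp
  have bnd: "\<bar>ls ! i\<bar> \<le> r" if i: "i < length ls" for i
  proof -
    have "ls ! i \<in> set ls" using i by simp
    then have "poly (char_poly A) (ls ! i) = 0" unfolding cp by (rule linear_poly_root)
    then have "ls ! i \<in> spectrum A" using spectrum_root_char_poly[OF Ac] by simp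
    then show ?thesis unfolding r_def real_spec_rad_def using fin by (intro Max_ge) auto
  qed
  show ?thesis
  proof (cases q)
    case 0
    then show ?thesis by (simp add: R_q_def)
  next
    case (Suc q')
    have "length ls > 0" using s1 by (cases "length ls") auto
    then have r0: "r \<ge> 0" using bnd[of 0] by linarith
    have qr: "real q * r \<le> 1" using rho Suc unfolding r_def[symmetric]
      by (simp add: field_simps)
    have "1 * r \<le> real q * r" using Suc r0 by (intro mult_right_mono) auto
    then have r1: "r \<le> 1" using qr by linarith
    let ?x = "\<lambda>i. (ls ! i)\<^sup>2"
    have xc: "?x i \<le> r\<^sup>2" if "i < length ls" for i
      using bnd[OF that] by (metis abs_ge_zero power2_abs power_mono)
    have "(real q * r) * r \<le> 1 * r" using qr r0 by (intro mult_right_mono) auto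
    then have "real q * r\<^sup>2 \<le> r" by (simp add: power2_eq_square mult.assoc)
    then have qc: "real q * r\<^sup>2 \<le> 1 + r\<^sup>2" using r1 by (simp add: add_increasing2)
    have Sb: "S ?x (length ls) q \<ge> (\<Prod>k<q. 1 - real k * r\<^sup>2)"
      using S_bound[of "length ls" ?x "r\<^sup>2" q] s1 xc qc by auto
    have RS: "R_q q ls = S ?x (length ls) q" unfolding R_q_def S_def Inj_def ..
    have "{..<q} = insert 0 {1..<q}" using Suc by auto
    then have pe: "(\<Prod>k<q. 1 - real k * r\<^sup>2) = (\<Prod>k=1..<q. 1 - real k * r\<^sup>2)" by simp
    have "(\<Prod>k=1..<q. 1 - real k * r) \<le> (\<Prod>k=1..<q. 1 - real k * r\<^sup>2)"
    proof (rule prod_mono, rule conjI)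
      fix k assume k: "k \<in> {1..<q}"
      have "real k * r \<le> real q * r" using k r0 by (intro mult_right_mono) auto
      then show "0 \<le> 1 - real k * r" using qr by simp
      have "r\<^sup>2 \<le> r" using r0 r1 by (simp add: power2_eq_square mult_left_le)
      then show "1 - real k * r \<le> 1 - real k * r\<^sup>2" by (simp add: mult_left_mono)
    qed
    then show ?thesis using Sb RS pe unfolding r_def by simp
  qed
qed

end
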